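(* Let $U$ be a nonempty finite set, $R\subseteq U\times U$ serial and transitive, and $cl$ the closure operator of $M(Reg(U,R))$. Let $n$ be an integer with $1\le n\le h(U)$, and let $X,Y\in Reg(U,R)$ with $h(X)=n$ and $h(Y)=n-1$. Then for every $Z\subseteq U$ with $Y\subsetneq Z\subsetneq X$, $cl(Z)=X$.
   Context: $R_s(x)=\{y\in U\mid xRy\}$; $\underline{R}(X)=\{x\mid R_s(x)\subseteq X\}$, $\overline{R}(X)=\{x\mid R_s(x)\cap X\neq\emptyset\}$; $X$ is regular if $X=\underline{R}(\overline{R}(X))$, and $Reg(U,R)$ is the lattice of regular sets under inclusion, with least element $\emptyset$. $h(A)$ is the length of a maximal chain in $[\emptyset,A]$. $M(Reg(U,R))$ is the matroid on $U$ with independent sets $\{X\subseteq U\mid h(Y)\ge|X\cap Y|\ \forall Y\in Reg(U,R)\}$, rank function $r(X)=\max\{|I|\mid I\subseteq X \text{ independent}\}$, and closure operator $cl(X)=\{u\in U\mid r(X\cup\{u\})=r(X)\}$. *)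

theory Defs
  imports Main
begin

definition Rs :: "'a set \<Rightarrow> ('a \<times> 'a) set \<Rightarrow> 'a \<Rightarrow> 'a set" where
  "Rs U R x = {y \<in> U. (x, y) \<in> R}"

definition lower_appr :: "'a set \<Rightarrow> ('a \<times> 'a) set \<Rightarrow> 'a set \<Rightarrow> 'a set" where
  "lower_appr U R X = {x \<in> U. Rs U R x \<subseteq> X}"

definition upper_appr :: "'a set \<Rightarrow> ('a \<times> 'a) set \<Rightarrow> 'a set \<Rightarrow> 'a set" where
  "upper_appr U R X = {x \<in> U. Rs U R x \<inter> X \<noteq> {}}"

definition regular :: "'a set \<Rightarrow> ('a \<times> 'a) set \<Rightarrow> 'a set \<Rightarrow> bool" where
  "regular U R X \<longleftrightarrow> X = lower_appr U R (upper_appr U R X)"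

definition Reg :: "'a set \<Rightarrow> ('a \<times> 'a) set \<Rightarrow> 'a set set" where
  "Reg U R = {X. regular U R X}"

definition serial :: "'a set \<Rightarrow> ('a \<times> 'a) set \<Rightarrow> bool" where
  "serial U R \<longleftrightarrow> (\<forall>x\<in>U. \<exists>y\<in>U. (x, y) \<in> R)"

definition h :: "'a set \<Rightarrow> ('a \<times> 'a) set \<Rightarrow> 'a set \<Rightarrow> nat" where
  "h U R A = Max {card C - 1 | C. finite C \<and> C \<noteq> {} \<and>
      C \<subseteq> {B \<in> Reg U R. B \<subseteq> A} \<and> chain\<^sub>\<subseteq> C}"

definition indep :: "'a set \<Rightarrow> ('a \<times> 'a) set \<Rightarrow> 'a set \<Rightarrow> bool" where
  "indep U R X \<longleftrightarrow> X \<subseteq> U \<and> (\<forall>Y\<in>Reg U R. card (X \<inter> Y) \<le> h U R Y)"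

definition rank :: "'a set \<Rightarrow> ('a \<times> 'a) set \<Rightarrow> 'a set \<Rightarrow> nat" where
  "rank U R X = Max {card I | I. I \<subseteq> X \<and> indep U R I}"

definition cl :: "'a set \<Rightarrow> ('a \<times> 'a) set \<Rightarrow> 'a set \<Rightarrow> 'a set" where
  "cl U R X = {u \<in> U. rank U R (X \<union> {u}) = rank U R X}"

end

theory Submission
  imports Defs
begin

lemma reg_sub: "X \<in> Reg U R \<Longrightarrow> X \<subseteq> U"
  unfolding Reg_def regular_def lower_appr_def by blast

lemma reg_empty: "serial U R \<Longrightarrow> {} \<in> Reg U R"
  unfolding Reg_def regular_def lower_appr_def upper_appr_def serial_def Rs_def by auto

lemma reg_U: "serial U R \<Longrightarrow> U \<in> Reg U R"
  unfolding Reg_def regular_def lower_appr_def upper_appr_def serial_def Rs_def by auto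

lemma final_exists:
  assumes "finite U" "R \<subseteq> U \<times> U" "serial U R" "trans R" "y \<in> U"
  shows "\<exists>v. (y, v) \<in> R \<and> (\<forall>v'. (v, v') \<in> R \<longrightarrow> (v', v) \<in> R)"
proof -
  let ?S = "Rs U R y"
  have fS: "finite ?S" using assms(1) unfolding Rs_def by auto
  have neS: "?S \<noteq> {}" using assms(3,5) unfolding serial_def Rs_def by auto
  let ?f = "\<lambda>w. card (Rs U R w)"
  have "Min (?f ` ?S) \<in> ?f ` ?S" using fS neS by auto
  then obtain w where w: "w \<in> ?S" "?f w = Min (?f ` ?S)" by auto
  have wmin: "\<And>w'. w' \<in> ?S \<Longrightarrow> ?f w \<le> ?f w'" using w fS by auto
  have eq: "Rs U R v = Rs U R w" if "v \<in> Rs U R w" for v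
  proof -
    have sub: "Rs U R v \<subseteq> Rs U R w" using that assms(4) unfolding Rs_def trans_def by blast
    have "v \<in> ?S" using that w(1) assms(4) unfolding Rs_def trans_def by blast
    then have "?f w \<le> ?f v" by (rule wmin)
    moreover have "finite (Rs U R w)" using assms(1) unfolding Rs_def by auto
    ultimately show ?thesis using sub by (metis card_subset_eq card_mono finite_subset le_antisym)
  qed
  have "w \<in> U" using w(1) unfolding Rs_def by auto
  then obtain v where v: "v \<in> U" "(w, v) \<in> R" using assms(3) unfolding serial_def by auto
  have vw: "v \<in> Rs U R w" using v unfolding Rs_def by auto
  have "(y, v) \<in> R" using w(1) v(2) assms(4) unfolding Rs_def trans_def by blast
  moreover have "(v', v) \<in> R" if "(v, v') \<in> R" for v'
  proof -
    have "v' \<in> U" using that assms(2) by auto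
    then have "v' \<in> Rs U R v" using that unfolding Rs_def by auto
    then have "v' \<in> Rs U R w" using eq[OF vw] by simp
    then have "Rs U R v' = Rs U R v" using eq vw by simp
    moreover have "v \<in> Rs U R v" using eq[OF vw] vw by simp
    ultimately show ?thesis unfolding Rs_def by auto
  qed
  ultimately show ?thesis by blast
qed

lemma reg_Int:
  assumes "finite U" "R \<subseteq> U \<times> U" "serial U R" "trans R"
    and A: "A \<in> Reg U R" and B: "B \<in> Reg U R"
  shows "A \<inter> B \<in> Reg U R"
proof -
  have Ae: "A = lower_appr U R (upper_appr U R A)" using A unfolding Reg_def regular_def by auto
  have Be: "B = lower_appr U R (upper_appr U R B)" using B unfolding Reg_def regular_def by auto
  have inA: "w \<in> A" if "x \<in> A" "(x, w) \<in> R" "\<forall>v'. (w, v') \<in> R \<longrightarrow> (v', w) \<in> R"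
    "A = lower_appr U R (upper_appr U R A)" for x w A
  proof -
    have wU: "w \<in> U" using that(2) assms(2) by auto
    have "w \<in> Rs U R x" using that(2) wU unfolding Rs_def by auto
    then have "w \<in> upper_appr U R A" using that(1) that(4) unfolding lower_appr_def by auto
    then obtain a where a: "(w, a) \<in> R" "a \<in> A" unfolding upper_appr_def Rs_def by auto
    have "Rs U R w \<subseteq> upper_appr U R A"
    proof
      fix t assume t: "t \<in> Rs U R w"
      then have "(t, w) \<in> R" "t \<in> U" using that(3) unfolding Rs_def by auto
      then have "(t, a) \<in> R" using a(1) assms(4) unfolding trans_def by blast
      moreover have "a \<in> U" using a(1) assms(2) by auto
      ultimately show "t \<in> upper_appr U R A" using a(2) \<open>t \<in> U\<close> unfolding upper_appr_def Rs_def by auto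
    qed
    then have "w \<in> lower_appr U R (upper_appr U R A)" using wU unfolding lower_appr_def by auto
    then show ?thesis using that(4) by simp
  qed
  have "A \<inter> B \<subseteq> lower_appr U R (upper_appr U R (A \<inter> B))"
  proof
    fix x assume x: "x \<in> A \<inter> B"
    have xU: "x \<in> U" using x reg_sub[OF A] by auto
    have "Rs U R x \<subseteq> upper_appr U R (A \<inter> B)"
    proof
      fix y assume y: "y \<in> Rs U R x"
      then have yU: "y \<in> U" and xy: "(x, y) \<in> R" unfolding Rs_def by auto
      obtain w where w: "(y, w) \<in> R" "\<forall>v'. (w, v') \<in> R \<longrightarrow> (v', w) \<in> R"
        using final_exists[OF assms(1-4) yU] by blast
      have xw: "(x, w) \<in> R" using xy w(1) assms(4) unfolding trans_def by blast
      have "w \<in> A" using inA[OF _ xw w(2) Ae] x by auto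
      moreover have "w \<in> B" using inA[OF _ xw w(2) Be] x by auto
      moreover have "w \<in> U" using w(1) assms(2) by auto
      ultimately show "y \<in> upper_appr U R (A \<inter> B)" using yU w(1) unfolding upper_appr_def Rs_def by auto
    qed
    then show "x \<in> lower_appr U R (upper_appr U R (A \<inter> B))" using xU unfolding lower_appr_def by auto
  qed
  moreover have "lower_appr U R (upper_appr U R (A \<inter> B)) \<subseteq> A \<inter> B"
  proof -
    have "lower_appr U R (upper_appr U R (A \<inter> B)) \<subseteq> lower_appr U R (upper_appr U R A)"
      unfolding lower_appr_def upper_appr_def by blast
    moreover have "lower_appr U R (upper_appr U R (A \<inter> B)) \<subseteq> lower_appr U R (upper_appr U R B)"
      unfolding lower_appr_def upper_appr_def by blast
    ultimately show ?thesis using Ae Be by blast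
  qed
  ultimately show ?thesis unfolding Reg_def regular_def by auto
qed

lemma h_set_finite:
  assumes "finite U"
  shows "finite {card C - 1 | C. finite C \<and> C \<noteq> {} \<and> C \<subseteq> {B \<in> Reg U R. B \<subseteq> A} \<and> chain\<^sub>\<subseteq> C}"
proof -
  have "{card C - 1 | C. finite C \<and> C \<noteq> {} \<and> C \<subseteq> {B \<in> Reg U R. B \<subseteq> A} \<and> chain\<^sub>\<subseteq> C}
      \<subseteq> (\<lambda>C. card C - 1) ` Pow (Pow U)"
    using reg_sub by blast
  then show ?thesis using assms by (meson finite_Pow_iff finite_imageI finite_subset)
qed

lemma h_ge:
  assumes "finite U" "finite C" "C \<noteq> {}" "C \<subseteq> {B \<in> Reg U R. B \<subseteq> A}" "chain\<^sub>\<subseteq> C"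
  shows "card C - 1 \<le> h U R A"
  unfolding h_def using assms h_set_finite[OF assms(1), of R A]
  by (intro Max_ge) auto

lemma h_attain:
  assumes "finite U" "serial U R"
  shows "\<exists>C. finite C \<and> C \<noteq> {} \<and> C \<subseteq> {B \<in> Reg U R. B \<subseteq> A} \<and> chain\<^sub>\<subseteq> C \<and> card C - 1 = h U R A"
proof -
  let ?M = "{card C - 1 | C. finite C \<and> C \<noteq> {} \<and> C \<subseteq> {B \<in> Reg U R. B \<subseteq> A} \<and> chain\<^sub>\<subseteq> C}"
  have "{{}} \<subseteq> {B \<in> Reg U R. B \<subseteq> A}" using reg_empty[OF assms(2)] by auto
  moreover have "chain\<^sub>\<subseteq> {{}}" unfolding chain_subset_def by auto
  ultimately have "card {{}} - 1 \<in> ?M" by (intro CollectI exI[of _ "{{}}"]) simp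
  then have "?M \<noteq> {}" by blast
  then have "Max ?M \<in> ?M" using h_set_finite[OF assms(1), of R A] by (intro Max_in) simp_all
  then obtain C where "Max ?M = card C - 1" "finite C" "C \<noteq> {}" "C \<subseteq> {B \<in> Reg U R. B \<subseteq> A}" "chain\<^sub>\<subseteq> C"
    by blast
  then show ?thesis unfolding h_def by metis
qed

lemma key_indep:
  assumes "finite U" "R \<subseteq> U \<times> U" "serial U R" "trans R"
    and C: "C \<subseteq> Reg U R" "finite C" "chain\<^sub>\<subseteq> C"
    and b: "\<forall>B\<in>C - {{}}. b B \<in> B \<and> (\<forall>B'\<in>C. B' \<subset> B \<longrightarrow> b B \<notin> B')"
    and T: "T \<in> Reg U R"
  shows "card (b ` (C - {{}}) \<inter> T) \<le> h U R T"
proof -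
  define D where "D = {B \<in> C - {{}}. b B \<in> T}"
  have bD: "b ` (C - {{}}) \<inter> T = b ` D" unfolding D_def by auto
  have fD: "finite D" using C(2) unfolding D_def by auto
  define G where "G = insert {} ((\<lambda>B. T \<inter> B) ` D)"
  have inj: "inj_on (\<lambda>B. T \<inter> B) D"
  proof (rule inj_onI)
    fix B1 B2 assume B: "B1 \<in> D" "B2 \<in> D" "T \<inter> B1 = T \<inter> B2"
    show "B1 = B2"
    proof (rule ccontr)
      assume ne: "B1 \<noteq> B2"
      have "B1 \<subseteq> B2 \<or> B2 \<subseteq> B1" using C(3) B(1,2) unfolding D_def chain_subset_def by auto
      then show False
      proof
        assume "B1 \<subseteq> B2"
        then have "B1 \<subset> B2" using ne by auto
        then have "b B2 \<notin> B1" using b B unfolding D_def by auto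
        moreover have "b B2 \<in> T \<inter> B2" using b B unfolding D_def by auto
        ultimately show False using B(3) by auto
      next
        assume "B2 \<subseteq> B1"
        then have "B2 \<subset> B1" using ne by auto
        then have "b B1 \<notin> B2" using b B unfolding D_def by auto
        moreover have "b B1 \<in> T \<inter> B1" using b B unfolding D_def by auto
        ultimately show False using B(3) by auto
      qed
    qed
  qed
  have notin: "{} \<notin> (\<lambda>B. T \<inter> B) ` D" using b unfolding D_def by auto
  have cG: "card G = card D + 1"
    unfolding G_def using notin fD inj by (simp add: card_image)
  have "finite G" "G \<noteq> {}" unfolding G_def using fD by auto
  moreover have "G \<subseteq> {B \<in> Reg U R. B \<subseteq> T}"
    unfolding G_def using reg_empty[OF assms(3)] reg_Int[OF assms(1-4) T] C(1) D_def by auto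
  moreover have "chain\<^sub>\<subseteq> G"
    using C(3) unfolding G_def chain_subset_def D_def by blast
  ultimately have "card G - 1 \<le> h U R T" by (rule h_ge[OF assms(1)])
  then have "card D \<le> h U R T" using cG by simp
  moreover have "card (b ` D) \<le> card D" using fD by (rule card_image_le)
  ultimately show ?thesis using bD by simp
qed

lemma extend_chain:
  assumes C: "chain\<^sub>\<subseteq> C"
    and b: "\<forall>B\<in>C - {{}}. b B \<in> B \<and> (\<forall>B'\<in>C. B' \<subset> B \<longrightarrow> b B \<notin> B')"
    and V: "\<forall>B\<in>C. B \<subset> V" "v \<in> V" "v \<notin> \<Union>C"
  shows "chain\<^sub>\<subseteq> (insert V C)"
    and "\<forall>B\<in>insert V C - {{}}. (b(V := v)) B \<in> B \<and> (\<forall>B'\<in>insert V C. B' \<subset> B \<longrightarrow> (b(V := v)) B \<notin> B')"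
proof -
  show "chain\<^sub>\<subseteq> (insert V C)" using C V(1) unfolding chain_subset_def by blast
  have VC: "V \<notin> C" using V(1) by auto
  show "\<forall>B\<in>insert V C - {{}}. (b(V := v)) B \<in> B \<and> (\<forall>B'\<in>insert V C. B' \<subset> B \<longrightarrow> (b(V := v)) B \<notin> B')"
  proof
    fix B assume B: "B \<in> insert V C - {{}}"
    show "(b(V := v)) B \<in> B \<and> (\<forall>B'\<in>insert V C. B' \<subset> B \<longrightarrow> (b(V := v)) B \<notin> B')"
    proof (cases "B = V")
      case True
      then show ?thesis using V VC by auto
    next
      case False
      then have BC: "B \<in> C - {{}}" using B by auto
      have "B \<subset> V" using V(1) BC by auto
      then show ?thesis using False b BC by auto
    qed
  qed
qed

lemma rank_ge:
  assumes "finite U" "I \<subseteq> W" "indep U R I"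
  shows "card I \<le> rank U R W"
proof -
  have "{card I | I. I \<subseteq> W \<and> indep U R I} \<subseteq> {..card U}"
    using assms(1) unfolding indep_def by (auto intro: card_mono)
  then have "finite {card I | I. I \<subseteq> W \<and> indep U R I}" by (rule finite_subset) auto
  then show ?thesis unfolding rank_def using assms(2,3) by (intro Max_ge) auto
qed

lemma rank_le:
  assumes "finite U" "X \<in> Reg U R" "W \<subseteq> X"
  shows "rank U R W \<le> h U R X"
proof -
  have "{card I | I. I \<subseteq> W \<and> indep U R I} \<subseteq> {..card U}"
    using assms(1) unfolding indep_def by (auto intro: card_mono)
  then have fin: "finite {card I | I. I \<subseteq> W \<and> indep U R I}" by (rule finite_subset) auto
  have "indep U R {}" unfolding indep_def by auto
  then have ne: "{card I | I. I \<subseteq> W \<and> indep U R I} \<noteq> {}" by blast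
  have "\<forall>k\<in>{card I | I. I \<subseteq> W \<and> indep U R I}. k \<le> h U R X"
  proof
    fix k assume "k \<in> {card I | I. I \<subseteq> W \<and> indep U R I}"
    then obtain I where I: "k = card I" "I \<subseteq> W" "indep U R I" by auto
    then have "card (I \<inter> X) \<le> h U R X" using assms(2) unfolding indep_def by auto
    moreover have "I \<inter> X = I" using I(2) assms(3) by auto
    ultimately show "k \<le> h U R X" using I(1) by simp
  qed
  then show ?thesis unfolding rank_def using fin ne by simp
qed

theorem proposition9:
  fixes U :: "'a set" and R :: "('a \<times> 'a) set" and n :: nat
  assumes "finite U" and "U \<noteq> {}" and "R \<subseteq> U \<times> U"
    and "serial U R" and "trans R"
    and "1 \<le> n" and "n \<le> h U R U"
    and "X \<in> Reg U R" and "Y \<in> Reg U R"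
    and "h U R X = n" and "h U R Y = n - 1"
    and "Z \<subseteq> U" and "Y \<subset> Z" and "Z \<subset> X"
  shows "cl U R Z = X"
proof -
  note A = assms(1,3,4,5)
  obtain C where C: "finite C" "C \<noteq> {}" "C \<subseteq> {B \<in> Reg U R. B \<subseteq> Y}" "chain\<^sub>\<subseteq> C"
    "card C - 1 = n - 1"
    using h_attain[OF assms(1,4), of Y] assms(11) by auto
  have ex: "\<exists>x\<in>B. \<forall>B'\<in>C. B' \<subset> B \<longrightarrow> x \<notin> B'" if B: "B \<in> C - {{}}" for B
  proof (cases "{B'\<in>C. B' \<subset> B} = {}")
    case True
    then show ?thesis using B by auto
  next
    case False
    have "subset.chain UNIV {B'\<in>C. B' \<subset> B}"
      using C(4) unfolding chain_subset_alt_def subset.chain_def by auto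
    then have "\<Union>{B'\<in>C. B' \<subset> B} \<in> {B'\<in>C. B' \<subset> B}"
      using False C(1) by (intro Union_in_chain) auto
    then have "\<Union>{B'\<in>C. B' \<subset> B} \<subset> B" by simp
    then obtain x where "x \<in> B" "x \<notin> \<Union>{B'\<in>C. B' \<subset> B}" by blast
    then show ?thesis by auto
  qed
  then obtain b0 where b0: "\<forall>B\<in>C - {{}}. b0 B \<in> B \<and> (\<forall>B'\<in>C. B' \<subset> B \<longrightarrow> b0 B \<notin> B')"
    by metis
  obtain z where z: "z \<in> Z" "z \<notin> Y" using assms(13) by auto
  have zX: "z \<in> X" using z assms(14) by auto
  have CY: "\<Union>C \<subseteq> Y" using C(3) by auto
  have YX: "Y \<subset> X" using assms(13,14) by (rule psubset_trans)
  have CX: "\<forall>B\<in>C. B \<subset> X"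
  proof
    fix B assume "B \<in> C"
    then have "B \<subseteq> Y" using C(3) by auto
    then show "B \<subset> X" using YX by (rule subset_psubset_trans)
  qed
  have zC: "z \<notin> \<Union>C" using CY z by auto
  note E1 = extend_chain[OF C(4) b0 CX zX zC]
  define E where "E = insert z (b0 ` (C - {{}}))"
  have XC: "X \<notin> C" using CX by auto
  have Xne: "X \<noteq> {}" using zX by auto
  have Eeq: "(b0(X := z)) ` (insert X C - {{}}) = E"
  proof -
    have "insert X C - {{}} = insert X (C - {{}})" using Xne by auto
    moreover have "X \<notin> C - {{}}" using XC by simp
    moreover have "(C - {{}}) \<inter> {x. x \<noteq> X} = C - {{}}" using XC by auto
    ultimately show ?thesis unfolding E_def by (simp add: fun_upd_image)
  qed
  have b0sub: "b0 ` (C - {{}}) \<subseteq> Y"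
  proof (rule image_subsetI)
    fix B assume B: "B \<in> C - {{}}"
    then have "b0 B \<in> B" using b0 by blast
    moreover have "B \<subseteq> Y" using B C(3) by auto
    ultimately show "b0 B \<in> Y" by auto
  qed
  have EZ: "E \<subseteq> Z" unfolding E_def using b0sub z assms(13) by auto
  have EX: "E \<subseteq> X" using EZ assms(14) by auto
  have XU: "X \<subseteq> U" using reg_sub[OF assms(8)] .
  have EU: "E \<subseteq> U" using EX XU by auto
  have C1reg: "insert X C \<subseteq> Reg U R" using C(3) assms(8) by auto
  have fC1: "finite (insert X C)" using C(1) by simp
  have Eind: "indep U R E"
    unfolding indep_def
  proof (intro conjI ballI)
    show "E \<subseteq> U" by (rule EU)
    fix T assume T: "T \<in> Reg U R"
    show "card (E \<inter> T) \<le> h U R T"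
      using key_indep[OF A C1reg fC1 E1(1) E1(2) T] unfolding Eeq .
  qed
  have injb0: "inj_on b0 (C - {{}})"
  proof (rule inj_onI)
    fix B1 B2 assume B: "B1 \<in> C - {{}}" "B2 \<in> C - {{}}" "b0 B1 = b0 B2"
    show "B1 = B2"
    proof (rule ccontr)
      assume ne: "B1 \<noteq> B2"
      have "B1 \<subset> B2 \<or> B2 \<subset> B1" using C(4) B ne unfolding chain_subset_def by blast
      then show False
      proof
        assume "B1 \<subset> B2"
        then have "b0 B2 \<notin> B1" using b0 B(1,2) by blast
        moreover have "b0 B1 \<in> B1" using b0 B(1) by blast
        ultimately show False using B(3) by simp
      next
        assume "B2 \<subset> B1"
        then have "b0 B1 \<notin> B2" using b0 B(1,2) by blast
        moreover have "b0 B2 \<in> B2" using b0 B(2) by blast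
        ultimately show False using B(3) by simp
      qed
    qed
  qed
  have "card C - 1 \<le> card (C - {{}})"
    using diff_card_le_card_Diff[of "{{}}" C] by simp
  then have "n - 1 \<le> card (b0 ` (C - {{}}))" using C(5) injb0 by (simp add: card_image)
  moreover have "z \<notin> b0 ` (C - {{}})" using b0sub z by auto
  moreover have "finite (b0 ` (C - {{}}))" using C(1) by auto
  ultimately have cardE: "n \<le> card E" unfolding E_def using assms(6) by simp
  have ZX: "Z \<subseteq> X" using assms(14) by auto
  have r1: "n \<le> rank U R Z" using rank_ge[OF assms(1) EZ Eind] cardE by linarith
  have r2: "rank U R Z \<le> n" using rank_le[OF assms(1,8) ZX] assms(10) by simp
  have rZ: "rank U R Z = n" using r1 r2 by simp
  show ?thesis
  proof
    show "cl U R Z \<subseteq> X"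
    proof
      fix u assume u: "u \<in> cl U R Z"
      then have uU: "u \<in> U" and req: "rank U R (Z \<union> {u}) = rank U R Z" unfolding cl_def by auto
      show "u \<in> X"
      proof (rule ccontr)
        assume uX: "u \<notin> X"
        have XsU: "X \<subset> U" using XU uU uX by blast
        have C1X: "\<forall>B\<in>insert X C. B \<subset> U"
        proof
          fix B assume "B \<in> insert X C"
          then show "B \<subset> U"
          proof
            assume "B = X" then show ?thesis using XsU by simp
          next
            assume "B \<in> C" then have "B \<subset> X" using CX by blast
            then show ?thesis using XsU by (rule psubset_trans)
          qed
        qed
        have uC1: "u \<notin> \<Union>(insert X C)"
        proof
          assume "u \<in> \<Union>(insert X C)"
          then obtain B where "B \<in> insert X C" "u \<in> B" by blast
          then have "B \<subseteq> X" using CX by blast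
          then show False using uX \<open>u \<in> B\<close> by blast
        qed
        note E2 = extend_chain[OF E1(1) E1(2) C1X uU uC1]
        have C2reg: "insert U (insert X C) \<subseteq> Reg U R" using C1reg reg_U[OF assms(4)] by simp
        have UC1: "U \<notin> insert X C" using C1X by blast
        have Une: "U \<noteq> {}" using assms(2) .
        have fC2: "finite (insert U (insert X C))" using C(1) by simp
        have img: "((b0(X := z))(U := u)) ` (insert U (insert X C) - {{}}) = insert u E"
        proof -
          have "insert U (insert X C) - {{}} = insert U (insert X C - {{}})" using Une by auto
          moreover have "U \<notin> insert X C - {{}}" using UC1 by simp
          moreover have "(insert X C - {{}}) \<inter> {x. x \<noteq> U} = insert X C - {{}}" using UC1 by auto
          ultimately show ?thesis using Eeq by (simp add: fun_upd_image)
        qed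
        have "insert u E \<subseteq> U" using EU uU by simp
        have indu: "indep U R (insert u E)"
          unfolding indep_def
        proof (intro conjI ballI)
          show "insert u E \<subseteq> U" by fact
          fix T assume T: "T \<in> Reg U R"
          show "card (insert u E \<inter> T) \<le> h U R T"
            using key_indep[OF A C2reg fC2 E2(1) E2(2) T] unfolding img .
        qed
        have subu: "insert u E \<subseteq> Z \<union> {u}" using EZ by auto
        have c1: "card (insert u E) \<le> rank U R (Z \<union> {u})" by (rule rank_ge[OF assms(1) subu indu])
        have "finite E" using finite_subset[OF EU assms(1)] .
        moreover have "u \<notin> E" using EX uX by auto
        ultimately have "card (insert u E) = card E + 1" by simp
        then have "n + 1 \<le> rank U R (Z \<union> {u})" using c1 cardE by linarith
        then show False using req rZ by simp
      qed
    qed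
  next
    show "X \<subseteq> cl U R Z"
    proof
      fix u assume uX: "u \<in> X"
      have ZuX: "Z \<union> {u} \<subseteq> X" using ZX uX by simp
      have "rank U R (Z \<union> {u}) \<le> n" using rank_le[OF assms(1,8) ZuX] assms(10) by simp
      moreover have EZu: "E \<subseteq> Z \<union> {u}" using EZ by auto
      moreover have "n \<le> rank U R (Z \<union> {u})"
        using rank_ge[OF assms(1) EZu Eind] cardE by linarith
      ultimately show "u \<in> cl U R Z" unfolding cl_def using rZ uX XU by auto
    qed
  qed
qed

end
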